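(* Let $\mathsf{G}$ be a connected undirected graph on $N=\{1,\dots,n\}$ with edge set $E$ and symmetric positive edge weights $w_{ij}=w_{ji}>0$ for $\{i,j\}\in E$, and let $\mathbf{L}$ be its Laplacian, so that the symmetric irreducible consensus system reads $\dot x_i=\sum_{j:\{i,j\}\in E}w_{ij}(x_j-x_i)$, i.e. $\dot{\bm{x}}=-\mathbf{L}\bm{x}$. Fix $\alpha>0$ and let $M(\alpha)=\{\bm{x}\in\mathbb{R}^n_{>0}:\ \frac1n\sum_{i=1}^n x_i=\alpha\}$. For $\bm{x}\in M(\alpha)$ set $\bm{\rho}=\bm{x}/\alpha$. Let $H:\mathbb{R}_{>0}\to\mathbb{R}$ be a strictly convex $C^2$ function with $H''>0$, write $h=H'$, and let $$V(\bm{x})=\alpha\sum_{i=1}^n H(\rho_i)=\alpha\sum_{i=1}^n H(x_i/\alpha).$$ For $a,b>0$ define $K_h(a,b)=\dfrac{a-b}{h(a)-h(b)}$ if $a\neq b$ and $K_h(a,a)=1/H''(a)$. Define the $n\times n$ matrix $\mathbf{G}^{-1}(\bm{x})$ by $[\mathbf{G}^{-1}(\bm{x})]_{ij}=-\alpha\,w_{ij}K_h(\rho_i,\rho_j)$ for $\{i,j\}\in E$, $[\mathbf{G}^{-1}(\bm{x})]_{ij}=0$ for $i\ne j$ with $\{i,j\}\notin E$, and $[\mathbf{G}^{-1}(\bm{x})]_{ii}=\sum_{j:\{i,j\}\in E}\alpha\,w_{ij}K_h(\rho_i,\rho_j)$. Then for every $\bm{x}\in M(\alpha)$, $\mathbf{G}^{-1}(\bm{x})$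 is a symmetric positive semidefinite matrix with kernel $\{c\bm{1}:c\in\mathbb{R}\}$, its entries depend continuously on $\bm{x}$, and $$-\mathbf{L}\bm{x}=-\mathbf{G}^{-1}(\bm{x})\,\nabla V(\bm{x}).$$ That is, the consensus dynamics on $M(\alpha)$ is a gradient descent flow of $V$ with respect to the (Riemannian) structure defined by $\mathbf{G}^{-1}(\cdot)$.
   Context: The Laplacian of the weighted undirected graph is $\mathbf{L}=[l_{ij}]$ with $l_{ij}=-w_{ij}$ for $\{i,j\}\in E$, $l_{ij}=0$ for other $i\ne j$, and $l_{ii}=\sum_{j:\{i,j\}\in E}w_{ij}$. The consensus value of $\bm{x}(0)\in M(\alpha)$ is $\alpha$, and $M(\alpha)$ is invariant under the dynamics. The gradient $\nabla V$ is the Euclidean gradient with respect to $\bm{x}$, so $\partial V/\partial x_i=H'(\rho_i)$. *)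

theory Defs
  imports "HOL-Analysis.Analysis"
begin

definition strictly_convex_on :: "real set \<Rightarrow> (real \<Rightarrow> real) \<Rightarrow> bool" where
  "strictly_convex_on S f \<longleftrightarrow>
     (\<forall>x\<in>S. \<forall>y\<in>S. \<forall>t. x \<noteq> y \<and> 0 < t \<and> t < 1 \<longrightarrow>
        f ((1 - t) * x + t * y) < (1 - t) * f x + t * f y)"

definition connected_graph :: "('n \<Rightarrow> 'n \<Rightarrow> bool) \<Rightarrow> bool" where
  "connected_graph E \<longleftrightarrow> (\<forall>i j. E\<^sup>*\<^sup>* i j)"

definition laplacian :: "('n::finite \<Rightarrow> 'n \<Rightarrow> bool) \<Rightarrow> ('n \<Rightarrow> 'n \<Rightarrow> real) \<Rightarrow> real^'n^'n" where
  "laplacian E w = (\<chi> i j. if i = j then (\<Sum>k\<in>{k. E i k}. w i k)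
                           else if E i j then - w i j else 0)"

definition Mset :: "real \<Rightarrow> (real^'n::finite) set" where
  "Mset \<alpha> = {x. (\<forall>i. 0 < x $ i) \<and> (\<Sum>i\<in>UNIV. x $ i) / real CARD('n) = \<alpha>}"

text \<open>K_h(a,b); h is H', h2 is H''.\<close>
definition Kh :: "(real \<Rightarrow> real) \<Rightarrow> (real \<Rightarrow> real) \<Rightarrow> real \<Rightarrow> real \<Rightarrow> real" where
  "Kh h h2 a b = (if a \<noteq> b then (a - b) / (h a - h b) else 1 / h2 a)"

definition Ginv :: "('n::finite \<Rightarrow> 'n \<Rightarrow> bool) \<Rightarrow> ('n \<Rightarrow> 'n \<Rightarrow> real) \<Rightarrow> real
    \<Rightarrow> (real \<Rightarrow> real) \<Rightarrow> (real \<Rightarrow> real) \<Rightarrow> real^'n \<Rightarrow> real^'n^'n" where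
  "Ginv E w \<alpha> h h2 x = (\<chi> i j.
     if i = j then (\<Sum>k\<in>{k. E i k}. \<alpha> * w i k * Kh h h2 (x $ i / \<alpha>) (x $ k / \<alpha>))
     else if E i j then - (\<alpha> * w i j * Kh h h2 (x $ i / \<alpha>) (x $ j / \<alpha>)) else 0)"

definition Vfun :: "real \<Rightarrow> (real \<Rightarrow> real) \<Rightarrow> real^'n::finite \<Rightarrow> real" where
  "Vfun \<alpha> H x = \<alpha> * (\<Sum>i\<in>UNIV. H (x $ i / \<alpha>))"

definition psd_matrix :: "real^'n^'n::finite \<Rightarrow> bool" where
  "psd_matrix A \<longleftrightarrow> (\<forall>v. 0 \<le> v \<bullet> (A *v v))"

end

theory Submission
  imports Defs
begin


definition lapmat :: "('n::finite \<Rightarrow> 'n \<Rightarrow> bool) \<Rightarrow> ('n \<Rightarrow> 'n \<Rightarrow> real) \<Rightarrow> real^'n^'n" where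
  "lapmat E c = (\<chi> i j. if i = j then (\<Sum>k\<in>{k. E i k}. c i k) else if E i j then - c i j else 0)"

lemma lapmat_row:
  fixes E :: "'n::finite \<Rightarrow> 'n \<Rightarrow> bool"
  assumes irr: "\<And>i. \<not> E i i"
  shows "(lapmat E c *v v) $ i = (\<Sum>k\<in>{k. E i k}. c i k * (v$i - v$k))"
proof -
  have "(lapmat E c *v v) $ i = (\<Sum>j\<in>UNIV. (if i = j then (\<Sum>k\<in>{k. E i k}. c i k) * v$j else 0)
        + (if E i j then - c i j * v$j else 0))"
    unfolding lapmat_def matrix_vector_mult_def using irr
    by (auto intro!: sum.cong)
  also have "\<dots> = (\<Sum>k\<in>{k. E i k}. c i k) * v$i + (\<Sum>j\<in>{j. E i j}. - c i j * v$j)"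
    by (simp add: sum.distrib sum.inter_filter[symmetric])
  also have "\<dots> = (\<Sum>k\<in>{k. E i k}. c i k * (v$i - v$k))"
    by (simp add: sum_distrib_right sum_subtractf right_diff_distrib sum_negf)
  finally show ?thesis .
qed

lemma lapmat_quad:
  fixes E :: "'n::finite \<Rightarrow> 'n \<Rightarrow> bool"
  assumes irr: "\<And>i. \<not> E i i" and sym: "\<And>i j. E i j \<Longrightarrow> E j i"
    and csym: "\<And>i j. E i j \<Longrightarrow> c i j = c j i"
  shows "v \<bullet> (lapmat E c *v v) = (\<Sum>i\<in>UNIV. \<Sum>k\<in>UNIV. if E i k then c i k * (v$i - v$k)^2 else 0) / 2"
proof -
  define S where "S = (\<Sum>i\<in>UNIV. \<Sum>k\<in>UNIV. if E i k then c i k * v$i * (v$i - v$k) else 0)"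
  have S1: "v \<bullet> (lapmat E c *v v) = S"
    unfolding S_def inner_vec_def lapmat_row[where E=E, OF irr]
    by (simp add: sum_distrib_left sum.inter_filter[symmetric] mult.assoc mult.left_commute)
  have "S = (\<Sum>k\<in>UNIV. \<Sum>i\<in>UNIV. if E i k then c i k * v$i * (v$i - v$k) else 0)"
    unfolding S_def by (rule sum.swap)
  also have "\<dots> = (\<Sum>i\<in>UNIV. \<Sum>k\<in>UNIV. if E i k then c i k * v$k * (v$k - v$i) else 0)"
    using sym csym by (intro sum.cong refl) (metis)
  finally have S2: "S = \<dots>" .
  have "2 * S = S + S" by simp
  also have "\<dots> = (\<Sum>i\<in>UNIV. \<Sum>k\<in>UNIV. if E i k then c i k * (v$i - v$k)^2 else 0)"
    apply (subst (2) S2) unfolding S_def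
    by (simp add: sum.distrib[symmetric]) (intro sum.cong refl, simp add: power2_eq_square algebra_simps)
  finally show ?thesis using S1 by simp
qed

lemma lapmat_psd:
  fixes E :: "'n::finite \<Rightarrow> 'n \<Rightarrow> bool"
  assumes irr: "\<And>i. \<not> E i i" and sym: "\<And>i j. E i j \<Longrightarrow> E j i"
    and csym: "\<And>i j. E i j \<Longrightarrow> c i j = c j i"
    and cpos: "\<And>i j. E i j \<Longrightarrow> 0 < c i j"
  shows "psd_matrix (lapmat E c)"
  unfolding psd_matrix_def
proof
  fix v :: "real^'n"
  show "0 \<le> v \<bullet> (lapmat E c *v v)"
  proof -
    have "0 \<le> (\<Sum>i\<in>UNIV. \<Sum>k\<in>UNIV. if E i k then c i k * (v$i - v$k)^2 else 0)"
      using cpos[THEN less_imp_le] by (auto intro!: sum_nonneg mult_nonneg_nonneg)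
    then show ?thesis using lapmat_quad[where E=E and c=c and v=v, OF irr sym csym] by simp
  qed
qed

lemma lapmat_ker:
  fixes E :: "'n::finite \<Rightarrow> 'n \<Rightarrow> bool"
  assumes irr: "\<And>i. \<not> E i i" and sym: "\<And>i j. E i j \<Longrightarrow> E j i"
    and csym: "\<And>i j. E i j \<Longrightarrow> c i j = c j i"
    and cpos: "\<And>i j. E i j \<Longrightarrow> 0 < c i j"
    and conn: "connected_graph E"
  shows "lapmat E c *v v = 0 \<longleftrightarrow> (\<exists>a. v = a *\<^sub>R (\<chi> i. 1))"
proof
  assume "lapmat E c *v v = 0"
  then have "v \<bullet> (lapmat E c *v v) = 0" by simp
  then have z: "(\<Sum>i\<in>UNIV. \<Sum>k\<in>UNIV. if E i k then c i k * (v$i - v$k)^2 else 0) = 0"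
    using lapmat_quad[where E=E and c=c and v=v, OF irr sym csym] by simp
  have nn: "\<And>i k. 0 \<le> (if E i k then c i k * (v$i - v$k)^2 else 0)"
    using cpos[THEN less_imp_le] by (auto intro!: mult_nonneg_nonneg)
  have edge: "v$i = v$k" if "E i k" for i k
  proof -
    have "(\<Sum>k\<in>UNIV. if E i k then c i k * (v$i - v$k)^2 else 0) = 0"
      using z nn by (subst (asm) sum_nonneg_eq_0_iff) (auto intro: sum_nonneg)
    then have "(if E i k then c i k * (v$i - v$k)^2 else 0) = 0"
      using nn by (subst (asm) sum_nonneg_eq_0_iff) auto
    then show ?thesis using that cpos[OF that] by simp
  qed
  have path: "E\<^sup>*\<^sup>* i j \<Longrightarrow> v$i = v$j" for i j
    by (induction rule: rtranclp_induct) (auto dest: edge)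
  have "v = (v $ undefined) *\<^sub>R (\<chi> i. 1)"
    using path conn unfolding connected_graph_def by (simp add: vec_eq_iff)
  then show "\<exists>a. v = a *\<^sub>R (\<chi> i. 1)" by blast
next
  assume "\<exists>a. v = a *\<^sub>R (\<chi> i. 1)"
  then obtain a where "v = a *\<^sub>R (\<chi> i. 1)" by blast
  then show "lapmat E c *v v = 0"
    by (simp add: vec_eq_iff lapmat_row[where E=E, OF irr])
qed




locale hK =
  fixes h h2 :: "real \<Rightarrow> real"
  assumes hd: "\<And>t. 0 < t \<Longrightarrow> (h has_real_derivative h2 t) (at t)"
    and h2pos: "\<And>t. 0 < t \<Longrightarrow> 0 < h2 t"
    and h2c: "continuous_on {0<..} h2"
begin

lemma h_mono: "0 < a \<Longrightarrow> a < b \<Longrightarrow> h a < h b"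
proof -
  assume a: "0 < a" and ab: "a < b"
  show ?thesis
  proof (rule DERIV_pos_imp_increasing[where f=h, OF ab])
    fix x assume "a \<le> x" "x \<le> b"
    then have "0 < x" using a by simp
    then show "\<exists>y. (h has_real_derivative y) (at x) \<and> 0 < y" using hd h2pos by blast
  qed
qed

lemma h_inj: "0 < a \<Longrightarrow> 0 < b \<Longrightarrow> a \<noteq> b \<Longrightarrow> h a \<noteq> h b"
proof -
  assume a: "0 < a" and b: "0 < b" and ne: "a \<noteq> b"
  from ne have "a < b \<or> b < a" by linarith
  then show ?thesis using h_mono[OF a, of b] h_mono[OF b, of a] by auto
qed

lemma K_pos: "0 < a \<Longrightarrow> 0 < b \<Longrightarrow> 0 < Kh h h2 a b"
proof -
  assume a: "0 < a" and b: "0 < b"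
  consider "a < b" | "a = b" | "b < a" by linarith
  then show ?thesis
  proof cases
    case 1
    then have "h a < h b" using h_mono a by blast
    then show ?thesis using 1 unfolding Kh_def by (simp add: divide_neg_neg)
  next
    case 2
    then show ?thesis using h2pos[OF a] unfolding Kh_def by simp
  next
    case 3
    then have "h b < h a" using h_mono b by blast
    then show ?thesis using 3 unfolding Kh_def by (simp add: divide_pos_pos)
  qed
qed

lemma K_sym: "Kh h h2 a b = Kh h h2 b a"
proof (cases "a = b")
  case False
  have "(b - a) / (h b - h a) = (- (a - b)) / (- (h a - h b))" by simp
  also have "\<dots> = (a - b) / (h a - h b)" by (rule minus_divide_divide)
  finally show ?thesis using False unfolding Kh_def by simp
qed (simp add: Kh_def)

lemma K_mul: "0 < a \<Longrightarrow> 0 < b \<Longrightarrow> Kh h h2 a b * (h a - h b) = a - b"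
  unfolding Kh_def using h_inj[of a b] by auto

lemma K_cont_at:
  assumes c: "0 < c" and d: "0 < d"
  shows "isCont (\<lambda>p. Kh h h2 (fst p) (snd p)) (c, d)"
proof (cases "c = d")
  case False
  have hc: "isCont h t" if "0 < t" for t using hd[OF that] by (rule DERIV_isCont)
  have "isCont (\<lambda>p. (fst p - snd p) / (h (fst p) - h (snd p))) (c, d)"
    using hc[OF c] hc[OF d] h_inj[OF c d False]
    by (intro continuous_intros isCont_o2[where f=fst and g=h] isCont_o2[where f=snd and g=h]) auto
  moreover have "eventually (\<lambda>p. p \<in> {0<..} \<times> {0<..} - {p. fst p = snd p}) (nhds (c, d))"
  proof (rule eventually_nhds_in_open)
    have "closed {p::real\<times>real. fst p = snd p}"
      by (intro closed_Collect_eq continuous_intros)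
    then show "open ({0<..} \<times> {0<..} - {p::real\<times>real. fst p = snd p})"
      by (rule open_Diff[OF open_Times[OF open_greaterThan open_greaterThan]])
  qed (use c d False in auto)
  then have "eventually (\<lambda>p. (fst p - snd p) / (h (fst p) - h (snd p)) = Kh h h2 (fst p) (snd p)) (nhds (c, d))"
    by eventually_elim (auto simp: Kh_def)
  ultimately show ?thesis by (simp add: isCont_cong)
next
  case True
  have g: "isCont (\<lambda>t. 1 / h2 t) c"
    using h2c c h2pos[OF c]
    by (intro continuous_intros) (auto simp: continuous_on_eq_continuous_at)
  show ?thesis
    unfolding continuous_at_eps_delta
  proof (intro allI impI)
    fix e :: real assume "0 < e"
    with g obtain r where r: "r > 0" "\<And>t. dist t c < r \<Longrightarrow> dist (1 / h2 t) (1 / h2 c) < e"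
      unfolding continuous_at_eps_delta by blast
    show "\<exists>r>0. \<forall>p. dist p (c, d) < r \<longrightarrow> dist (Kh h h2 (fst p) (snd p)) (Kh h h2 (fst (c, d)) (snd (c, d))) < e"
    proof (intro exI[of _ "min r c"] conjI allI impI)
      show "0 < min r c" using r c by simp
      fix p :: "real \<times> real" assume p: "dist p (c, d) < min r c"
      obtain a b where ab: "p = (a, b)" by force
      have da: "dist a c < min r c" and db: "dist b c < min r c"
        using p True ab dist_fst_le[of p "(c,d)"] dist_snd_le[of p "(c,d)"] by auto
      have apos: "0 < a" and bpos: "0 < b" using da db by (auto simp: dist_real_def)
      have Kcd: "Kh h h2 c d = 1 / h2 c" using True by (simp add: Kh_def)
      have "\<exists>z. dist z c < r \<and> Kh h h2 a b = 1 / h2 z"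
      proof (cases "a = b")
        case True then show ?thesis using da by (auto simp: Kh_def)
      next
        case ne: False
        have mvt: "\<exists>z. min a b < z \<and> z < max a b \<and> (a - b) / (h a - h b) = 1 / h2 z"
        proof -
          have lt: "min a b < max a b" using ne by auto
          have der: "\<And>x. min a b \<le> x \<Longrightarrow> x \<le> max a b \<Longrightarrow> (h has_real_derivative h2 x) (at x)"
          proof -
            fix x assume "min a b \<le> x"
            then have "0 < x" using apos bpos by (simp add: min_def split: if_splits)
            then show "(h has_real_derivative h2 x) (at x)" by (rule hd)
          qed
          from MVT2[OF lt der] obtain z where z: "min a b < z" "z < max a b"
            "h (max a b) - h (min a b) = (max a b - min a b) * h2 z"
            by blast
          have "0 < z" using z(1) apos bpos by (simp add: min_def split: if_splits)
          then have "h2 z > 0" by (rule h2pos)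
          then show ?thesis using z ne h_inj[OF apos bpos ne]
            by (intro exI[of _ z]) (auto simp: min_def max_def field_simps split: if_splits)
        qed
        then obtain z where "min a b < z" "z < max a b" "(a - b) / (h a - h b) = 1 / h2 z" by blast
        moreover have "dist z c < r" using calculation da db
          by (auto simp: dist_real_def min_def max_def split: if_splits)
        ultimately show ?thesis using ne by (auto simp: Kh_def)
      qed
      then obtain z where "dist z c < r" "Kh h h2 a b = 1 / h2 z" by blast
      then show "dist (Kh h h2 (fst p) (snd p)) (Kh h h2 (fst (c, d)) (snd (c, d))) < e"
        using r(2) ab Kcd by simp
    qed
  qed
qed

end



theorem theorem2:
  fixes E :: "'n::finite \<Rightarrow> 'n \<Rightarrow> bool"
    and w :: "'n \<Rightarrow> 'n \<Rightarrow> real"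
    and \<alpha> :: real
    and H h h2 :: "real \<Rightarrow> real"
  assumes E_sym: "\<And>i j. E i j \<Longrightarrow> E j i"
    and E_irrefl: "\<And>i. \<not> E i i"
    and E_conn: "connected_graph E"
    and w_sym: "\<And>i j. E i j \<Longrightarrow> w i j = w j i"
    and w_pos: "\<And>i j. E i j \<Longrightarrow> 0 < w i j"
    and alpha_pos: "0 < \<alpha>"
    and H_deriv: "\<And>t. 0 < t \<Longrightarrow> (H has_real_derivative h t) (at t)"
    and h_deriv: "\<And>t. 0 < t \<Longrightarrow> (h has_real_derivative h2 t) (at t)"
    and h2_cont: "continuous_on {0<..} h2"
    and h2_pos: "\<And>t. 0 < t \<Longrightarrow> 0 < h2 t"
    and H_strict: "strictly_convex_on {0<..} H"
  shows "(\<forall>x \<in> Mset \<alpha>.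
      transpose (Ginv E w \<alpha> h h2 x) = Ginv E w \<alpha> h h2 x
    \<and> psd_matrix (Ginv E w \<alpha> h h2 x)
    \<and> {v. Ginv E w \<alpha> h h2 x *v v = 0} = {v. \<exists>c::real. v = c *\<^sub>R (\<chi> i. 1)}
    \<and> (\<exists>g. (Vfun \<alpha> H has_derivative (\<lambda>y. g \<bullet> y)) (at x)
          \<and> - (laplacian E w *v x) = - (Ginv E w \<alpha> h h2 x *v g)))
    \<and> (\<forall>i j. continuous_on (Mset \<alpha>) (\<lambda>x. Ginv E w \<alpha> h h2 x $ i $ j))"
  proof -
  interpret hK h h2 using h_deriv h2_pos h2_cont by unfold_locales
  define c where "c = (\<lambda>(x::real^'n) i k. \<alpha> * w i k * Kh h h2 (x$i/\<alpha>) (x$k/\<alpha>))"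
  have Geq: "Ginv E w \<alpha> h h2 x = lapmat E (c x)" for x
    by (simp add: Ginv_def lapmat_def c_def)
  have Leq: "laplacian E w = lapmat E w"
    by (simp add: laplacian_def lapmat_def)
  have Kcont: "continuous_on (Mset \<alpha>) (\<lambda>x. Kh h h2 (x$i/\<alpha>) (x$k/\<alpha>))" for i k :: 'n
  proof (rule continuous_on_compose2[where t="{0<..} \<times> {0<..}" and g="\<lambda>p. Kh h h2 (fst p) (snd p)"
        and f="\<lambda>x. (x$i/\<alpha>, x$k/\<alpha>)", simplified])
    show "continuous_on ({0<..} \<times> {0<..}) (\<lambda>p. Kh h h2 (fst p) (snd p))"
      by (rule continuous_at_imp_continuous_on) (auto intro: K_cont_at)
    show "continuous_on (Mset \<alpha>) (\<lambda>x. (x$i/\<alpha>, x$k/\<alpha>))"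
      using alpha_pos by (intro continuous_intros) auto
    show "(\<lambda>x. (x$i/\<alpha>, x$k/\<alpha>)) ` Mset \<alpha> \<subseteq> {0<..} \<times> {0<..}"
    proof (rule image_subsetI)
      fix x :: "real^'n" assume "x \<in> Mset \<alpha>"
      then have "\<forall>i. 0 < x$i" by (simp add: Mset_def)
      then show "(x$i/\<alpha>, x$k/\<alpha>) \<in> {0<..} \<times> {0<..}" using alpha_pos by simp
    qed
  qed
  have part1: "transpose (Ginv E w \<alpha> h h2 x) = Ginv E w \<alpha> h h2 x
    \<and> psd_matrix (Ginv E w \<alpha> h h2 x)
    \<and> {v. Ginv E w \<alpha> h h2 x *v v = 0} = {v. \<exists>c::real. v = c *\<^sub>R (\<chi> i. 1)}
    \<and> (\<exists>g. (Vfun \<alpha> H has_derivative (\<lambda>y. g \<bullet> y)) (at x)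
          \<and> - (laplacian E w *v x) = - (Ginv E w \<alpha> h h2 x *v g))" if x: "x \<in> Mset \<alpha>" for x
  proof -
    have xpos: "0 < x$i / \<alpha>" for i
    proof -
      have "\<forall>i. 0 < x$i" using x by (simp add: Mset_def)
      then show ?thesis using alpha_pos by simp
    qed
    have csym: "c x i j = c x j i" if "E i j" for i j
      using w_sym[OF that] K_sym by (simp add: c_def)
    have cpos: "0 < c x i j" if "E i j" for i j
      using w_pos[OF that] K_pos[OF xpos xpos] alpha_pos by (simp add: c_def)
    have T: "transpose (lapmat E (c x)) = lapmat E (c x)"
      unfolding transpose_def lapmat_def vec_eq_iff
      using E_sym csym by (auto) 
    have P: "psd_matrix (lapmat E (c x))"
      by (rule lapmat_psd[where E=E and c="c x", OF E_irrefl E_sym csym cpos])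
    have Ker: "{v. lapmat E (c x) *v v = 0} = {v. \<exists>a::real. v = a *\<^sub>R (\<chi> i. 1)}"
      using lapmat_ker[where E=E and c="c x", OF E_irrefl E_sym csym cpos E_conn] by blast
    define g where "g = (\<chi> i. h (x$i/\<alpha>))"
    have bl: "bounded_linear (\<lambda>y::real^'n. y$i / \<alpha>)" for i
      using bounded_linear_compose[OF bounded_linear_divide[of \<alpha>] bounded_linear_vec_nth[of i]] by simp
    have di: "((\<lambda>z. H (z$i/\<alpha>)) has_derivative (\<lambda>y. h (x$i/\<alpha>) * (y$i/\<alpha>))) (at x)" for i
      using has_derivative_compose[OF bounded_linear_imp_has_derivative[OF bl]
          H_deriv[OF xpos, unfolded has_field_derivative_def]]
      by simp
    have "((\<lambda>z. \<alpha> * (\<Sum>i\<in>UNIV. H (z$i/\<alpha>))) has_derivative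
          (\<lambda>y. \<alpha> * (\<Sum>i\<in>UNIV. h (x$i/\<alpha>) * (y$i/\<alpha>)))) (at x)"
      by (intro has_derivative_mult_right has_derivative_sum di)
    moreover have "(\<lambda>y. \<alpha> * (\<Sum>i\<in>UNIV. h (x$i/\<alpha>) * (y$i/\<alpha>))) = (\<lambda>y. g \<bullet> y)"
      using alpha_pos by (auto simp: g_def inner_vec_def sum_distrib_left intro!: sum.cong)
    ultimately have D: "(Vfun \<alpha> H has_derivative (\<lambda>y. g \<bullet> y)) (at x)"
      unfolding Vfun_def by (metis (no_types, lifting) ext)
    have G: "lapmat E w *v x = lapmat E (c x) *v g"
    proof (subst vec_eq_iff, intro allI)
      fix i
      show "(lapmat E w *v x) $ i = (lapmat E (c x) *v g) $ i"
        unfolding lapmat_row[where E=E, OF E_irrefl]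
      proof (rule sum.cong[OF refl])
        fix k assume "k \<in> {k. E i k}"
        have "c x i k * (g$i - g$k) = \<alpha> * w i k * (Kh h h2 (x$i/\<alpha>) (x$k/\<alpha>) * (h (x$i/\<alpha>) - h (x$k/\<alpha>)))"
          by (simp add: c_def g_def)
        also have "\<dots> = \<alpha> * w i k * (x$i/\<alpha> - x$k/\<alpha>)" using K_mul[OF xpos xpos] by simp
        also have "\<dots> = w i k * (x$i - x$k)" using alpha_pos by (simp add: field_simps)
        finally show "w i k * (x$i - x$k) = c x i k * (g$i - g$k)" by simp
      qed
    qed
    show ?thesis unfolding Geq Leq using T P Ker D G by auto
  qed
  have anz: "\<alpha> \<noteq> 0" using alpha_pos by simp
  have part2: "continuous_on (Mset \<alpha>) (\<lambda>x. Ginv E w \<alpha> h h2 x $ i $ j)" for i j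
  proof (cases "i = j")
    case True
    then show ?thesis unfolding Ginv_def
      by (simp del: vec_lambda_beta add: vec_lambda_beta) (intro continuous_on_sum continuous_on_mult_left Kcont)
  next
    case False
    then show ?thesis unfolding Ginv_def
      by (cases "E i j") (simp_all, (intro continuous_on_minus continuous_on_mult_left Kcont continuous_on_const)+)
  qed
  show ?thesis by (intro conjI ballI allI part1 part2)
qed

end
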